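(* Let $t$ be the Thue-Morse word, and let $i>0$ and $k>0$ be integers such that $t(i..i+k]$ is a palindrome, and suppose there is $m\in\{1,2,3\}$ with $i\equiv m\pmod 4$ and $i+k\equiv 4-m\pmod 4$. Then $t(i-1..i+k+1]$ is a palindrome, and $t(i+1..i+k-1]$ is a palindrome.
   Context: The Thue-Morse word $t=t[1]t[2]\cdots=abbabaabbaababba\cdots$ is the fixed point starting with $a$ of the morphism $\tau: a\mapsto abba,\ b\mapsto baab$. For $0\le i\le j$, $t(i..j]$ denotes the factor $t[i+1]t[i+2]\cdots t[j]$ (empty if $i=j$). A palindrome is a word $p=p[1]\cdots p[n]$ with $p[i]=p[n-i+1]$ for all $i$ (the empty word is a palindrome). *)

theory Defs
  imports Main
begin

datatype letter = a | b

fun tau_letter :: "letter \<Rightarrow> letter list" where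
  "tau_letter a = [a, b, b, a]"
| "tau_letter b = [b, a, a, b]"

definition tau :: "letter list \<Rightarrow> letter list" where
  "tau w = concat (map tau_letter w)"

text \<open>The Thue-Morse word t = t[1] t[2] ..., the fixed point of tau starting with a.
  Since tau^n(a) is a prefix of tau^(n+1)(a) of length 4^n >= n, the n-th letter (1-indexed)
  is the n-th letter of tau^n(a).\<close>
definition thue_morse :: "nat \<Rightarrow> letter" where
  "thue_morse n = ((tau ^^ n) [a]) ! (n - 1)"

text \<open>The factor t(i..j] = t[i+1] ... t[j] (empty if j <= i).\<close>
definition factor :: "nat \<Rightarrow> nat \<Rightarrow> letter list" where
  "factor i j = map thue_morse [i + 1..<j + 1]"

definition palindrome :: "'x list \<Rightarrow> bool" where
  "palindrome p \<longleftrightarrow> (\<forall>k. 1 \<le> k \<and> k \<le> length p \<longrightarrow> p ! (k - 1) = p ! (length p - k))"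

end

theory Submission
  imports Defs
begin

fun tmf :: "nat \<Rightarrow> letter" where
  "tmf j = (if j = 0 then a else tau_letter (tmf (j div 4)) ! (j mod 4))"

declare tmf.simps[simp del]

lemma tmf_eq: assumes "r < 4" shows "tmf (4*q+r) = tau_letter (tmf q) ! r"
proof (cases "4*q+r = 0")
  case True
  then have "q = 0" "r = 0" by auto
  then show ?thesis by (simp add: tmf.simps)
next
  case False
  have "tmf (4*q+r) = (if 4*q+r = 0 then a else tau_letter (tmf ((4*q+r) div 4)) ! ((4*q+r) mod 4))"
    by (rule tmf.simps)
  then show ?thesis using assms False by auto
qed

lemma len_tau_letter[simp]: "length (tau_letter x) = 4"
  by (cases x) auto

lemma tau_nth: "q < length w \<Longrightarrow> r < 4 \<Longrightarrow> tau w ! (4*q+r) = tau_letter (w ! q) ! r"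
proof (induction w arbitrary: q)
  case Nil then show ?case by simp
next
  case (Cons x w)
  show ?case
  proof (cases q)
    case 0 then show ?thesis using Cons.prems by (simp add: tau_def nth_append)
  next
    case (Suc q')
    have "tau (x # w) = tau_letter x @ tau w" by (simp add: tau_def)
    moreover have "4*q+r = 4 + (4*q'+r)" using Suc by simp
    ultimately have "tau (x # w) ! (4*q+r) = tau w ! (4*q'+r)"
      by (simp add: nth_append)
    then show ?thesis using Cons Suc by simp
  qed
qed

lemma len_tau[simp]: "length (tau w) = 4 * length w"
  by (induction w) (auto simp: tau_def)

lemma len_pow: "length ((tau ^^ n) [a]) = 4 ^ n"
  by (induction n) auto

lemma pow_nth: "j < 4 ^ n \<Longrightarrow> (tau ^^ n) [a] ! j = tmf j"
proof (induction n arbitrary: j)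
  case 0 then show ?case by (simp add: tmf.simps)
next
  case (Suc n)
  define q where "q = j div 4"
  define r where "r = j mod 4"
  have j: "j = 4*q+r" and r: "r < 4" unfolding q_def r_def by auto
  have q: "q < 4 ^ n" using Suc.prems j by auto
  have "(tau ^^ Suc n) [a] ! j = tau ((tau ^^ n) [a]) ! (4*q+r)" using j by simp
  also have "\<dots> = tau_letter (tmf q) ! r" using tau_nth[of q "(tau ^^ n) [a]" r] q r Suc.IH len_pow
    by simp
  also have "\<dots> = tmf j" using j r tmf_eq by simp
  finally show ?case .
qed

lemma tm_tmf: "n > 0 \<Longrightarrow> thue_morse n = tmf (n - 1)"
proof -
  assume "n > 0"
  have "n - 1 < 4 ^ n"
  proof -
    have "n < 4 ^ n" by (induction n) auto
    then show ?thesis by simp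
  qed
  then show ?thesis unfolding thue_morse_def by (simp add: pow_nth)
qed

lemma blk: "tmf (4*q+3) = tmf (4*q)" "tmf (4*q+1) = tmf (4*q+2)" "tmf (4*q+1) \<noteq> tmf (4*q)"
  using tmf_eq[of 0 q] tmf_eq[of 1 q] tmf_eq[of 2 q] tmf_eq[of 3 q]
  by (cases "tmf q"; simp)+

lemma two: "(x::letter) \<noteq> y \<Longrightarrow> z \<noteq> y \<Longrightarrow> x = z"
  by (cases x; cases y; cases z) auto

lemma pal_char: "palindrome (factor i j) \<longleftrightarrow> (\<forall>x. i < x \<and> x \<le> j \<longrightarrow> thue_morse x = thue_morse (i+j+1-x))"
proof -
  have len: "length (factor i j) = j - i" by (simp add: factor_def Suc_diff_Suc)
  have nth: "\<And>l. l < j - i \<Longrightarrow> factor i j ! l = thue_morse (i+1+l)" by (simp add: factor_def del: upt_Suc)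
  show ?thesis
  proof
    assume p: "palindrome (factor i j)"
    show "\<forall>x. i < x \<and> x \<le> j \<longrightarrow> thue_morse x = thue_morse (i+j+1-x)"
    proof (intro allI impI)
      fix x assume x: "i < x \<and> x \<le> j"
      have "1 \<le> x - i \<and> x - i \<le> length (factor i j)" using x len by auto
      then have "factor i j ! (x - i - 1) = factor i j ! (j - i - (x - i))"
        using p[unfolded palindrome_def, rule_format, of "x - i"] len by simp
      moreover have "factor i j ! (x - i - 1) = thue_morse x" proof -
        have "x - i - 1 < j - i" using x by arith
        then show ?thesis using nth[of "x - i - 1"] x by simp
      qed
      moreover have "factor i j ! (j - i - (x - i)) = thue_morse (i+j+1-x)"
      proof -
        have "j - i - (x - i) < j - i" using x by arith
        then show ?thesis using nth[of "j - i - (x - i)"] x by (simp add: Suc_diff_le)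
      qed
      ultimately show "thue_morse x = thue_morse (i+j+1-x)" by simp
    qed
  next
    assume h: "\<forall>x. i < x \<and> x \<le> j \<longrightarrow> thue_morse x = thue_morse (i+j+1-x)"
    show "palindrome (factor i j)" unfolding palindrome_def len
    proof (intro allI impI)
      fix kk assume kk: "1 \<le> kk \<and> kk \<le> j - i"
      have "thue_morse (i + kk) = thue_morse (i+j+1-(i+kk))" using h kk by auto
      moreover have "kk - 1 < j - i" "j - i - kk < j - i" using kk by arith+
      moreover have "i + 1 + (kk - 1) = i + kk" "i + 1 + (j - i - kk) = i+j+1-(i+kk)" using kk by arith+
      ultimately show "factor i j ! (kk - 1) = factor i j ! (j - i - kk)" using nth by metis
    qed
  qed
qed

theorem proposition6:
  fixes i k m :: nat
  assumes "i > 0" and "k > 0"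
    and "palindrome (factor i (i + k))"
    and "m \<in> {1, 2, 3}"
    and "i mod 4 = m" and "(i + k) mod 4 = (4 - m) mod 4"
  shows "palindrome (factor (i - 1) (i + k + 1)) \<and> palindrome (factor (i + 1) (i + k - 1))"
proof -
  have P: "\<And>x. i < x \<Longrightarrow> x \<le> i + k \<Longrightarrow> thue_morse x = thue_morse (2*i+k+1-x)"
    using assms(3) unfolding pal_char by (metis mult_2 add.assoc)
  have e1: "tmf i = tmf (i+k-1)" using P[of "i+1"] assms(1,2) tm_tmf by simp
  have e2: "tmf (i - 1) = tmf (i + k)"
  proof -
    obtain q where q: "i = 4*q + m" using assms(5) by (metis mod_div_mult_eq mult.commute add.commute)
    obtain q' where q': "i + k = 4*q' + (4 - m) mod 4" using assms(6) by (metis mod_div_mult_eq mult.commute add.commute)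
    from assms(4) consider "m = 1" | "m = 2" | "m = 3" by auto
    then show ?thesis
    proof cases
      case 1
      then have h: "i - 1 = 4*q" "i = 4*q+1" "i + k = 4*q'+3" "i+k-1 = 4*q'+2" using q q' by auto
      have "tmf (4*q+1) = tmf i" by (simp only: h(2))
      also have "\<dots> = tmf (i+k-1)" by (rule e1)
      also have "\<dots> = tmf (4*q'+2)" by (simp only: h(4))
      finally have "tmf (4*q+1) = tmf (4*q'+2)" .
      moreover have "tmf (i - 1) = tmf (4*q)" by (simp only: h(1))
      moreover have "tmf (i + k) = tmf (4*q'+3)" by (simp only: h(3))
      ultimately show ?thesis
        using tmf_eq[of 0 q] tmf_eq[of 1 q] tmf_eq[of 2 q] tmf_eq[of 3 q]
          tmf_eq[of 0 q'] tmf_eq[of 1 q'] tmf_eq[of 2 q'] tmf_eq[of 3 q']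
        by (cases "tmf q"; cases "tmf q'") simp_all
    next
      case 2
      then have h: "i - 1 = 4*q+1" "i = 4*q+2" "i + k = 4*q'+2" "i+k-1 = 4*q'+1" using q q' by auto
      have "tmf (4*q+2) = tmf i" by (simp only: h(2))
      also have "\<dots> = tmf (i+k-1)" by (rule e1)
      also have "\<dots> = tmf (4*q'+1)" by (simp only: h(4))
      finally have "tmf (4*q+2) = tmf (4*q'+1)" .
      moreover have "tmf (i - 1) = tmf (4*q+1)" by (simp only: h(1))
      moreover have "tmf (i + k) = tmf (4*q'+2)" by (simp only: h(3))
      ultimately show ?thesis
        using tmf_eq[of 0 q] tmf_eq[of 1 q] tmf_eq[of 2 q] tmf_eq[of 3 q]
          tmf_eq[of 0 q'] tmf_eq[of 1 q'] tmf_eq[of 2 q'] tmf_eq[of 3 q']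
        by (cases "tmf q"; cases "tmf q'") simp_all
    next
      case 3
      then have h: "i - 1 = 4*q+2" "i = 4*q+3" "i + k = 4*q'+1" "i+k-1 = 4*q'" using q q' by auto
      have "tmf (4*q+3) = tmf i" by (simp only: h(2))
      also have "\<dots> = tmf (i+k-1)" by (rule e1)
      also have "\<dots> = tmf (4*q')" by (simp only: h(4))
      finally have "tmf (4*q+3) = tmf (4*q')" .
      moreover have "tmf (i - 1) = tmf (4*q+2)" by (simp only: h(1))
      moreover have "tmf (i + k) = tmf (4*q'+1)" by (simp only: h(3))
      ultimately show ?thesis
        using tmf_eq[of 0 q] tmf_eq[of 1 q] tmf_eq[of 2 q] tmf_eq[of 3 q]
          tmf_eq[of 0 q'] tmf_eq[of 1 q'] tmf_eq[of 2 q'] tmf_eq[of 3 q']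
        by (cases "tmf q"; cases "tmf q'") simp_all
    qed
  qed
  have A: "palindrome (factor (i - 1) (i + k + 1))"
    unfolding pal_char
  proof (intro allI impI)
    fix x assume x: "i - 1 < x \<and> x \<le> i + k + 1"
    have s: "i - 1 + (i + k + 1) + 1 - x = 2*i+k+1-x" using assms(1) by simp
    show "thue_morse x = thue_morse (i - 1 + (i + k + 1) + 1 - x)"
      unfolding s
    proof -
      consider "x = i" | "x = i + k + 1" | "i < x \<and> x \<le> i + k" using x by linarith
      then show "thue_morse x = thue_morse (2*i+k+1-x)"
      proof cases
        case 1 then show ?thesis using e2 tm_tmf assms(1) by simp
        next
        case 2 then show ?thesis using e2 tm_tmf assms(1) by simp
        next
        case 3 then show ?thesis using P by simp
      qed
    qed
  qed
  have B: "palindrome (factor (i + 1) (i + k - 1))"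
    unfolding pal_char
  proof (intro allI impI)
    fix x assume x: "i + 1 < x \<and> x \<le> i + k - 1"
    have s: "i + 1 + (i + k - 1) + 1 - x = 2*i+k+1-x" using x by arith
    show "thue_morse x = thue_morse (i + 1 + (i + k - 1) + 1 - x)"
      unfolding s using P[of x] x by linarith
  qed
  show ?thesis using A B by simp
qed

end
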